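(* Let $A,B\in\mathbb{R}^{n\times n}$ satisfy $\mathrm{rank}(A-B)=\mathrm{rank}(A)-\mathrm{rank}(B)$, $A+A^T>0$ (positive definite) and $B+B^T\ge0$ (positive semidefinite). Then $\ker B=\ker(B+B^T)$. *)

theory Defs
  imports "HOL-Analysis.Analysis"
begin

definition pos_def_mat :: "real^'n^'n \<Rightarrow> bool" where
  "pos_def_mat M \<longleftrightarrow> M = transpose M \<and> (\<forall>x. x \<noteq> 0 \<longrightarrow> x \<bullet> (M *v x) > 0)"

definition pos_semidef_mat :: "real^'n^'n \<Rightarrow> bool" where
  "pos_semidef_mat M \<longleftrightarrow> M = transpose M \<and> (\<forall>x. x \<bullet> (M *v x) \<ge> 0)"

definition ker_mat :: "real^'n^'m \<Rightarrow> (real^'n) set" where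
  "ker_mat M = {x. M *v x = 0}"

end

theory Submission
  imports Defs
begin

lemma tr: fixes M :: "real^'n^'n" shows "x \<bullet> (M *v y) = (transpose M *v x) \<bullet> y"
  by (metis transpose_matrix_vector dot_lmul_matrix)

lemma quad_tr: fixes M :: "real^'n^'n" shows "x \<bullet> ((M + transpose M) *v x) = 2 * (x \<bullet> (M *v x))"
proof -
  have "x \<bullet> (transpose M *v x) = x \<bullet> (M *v x)"
    by (simp add: tr inner_commute)
  thus ?thesis by (simp add: matrix_vector_mult_add_rdistrib inner_add_right)
qed

lemma psd_zero:
  fixes M :: "real^'n^'n"
  assumes "pos_semidef_mat M" "x \<bullet> (M *v x) = 0"
  shows "M *v x = 0"
proof -
  have sym: "transpose M = M" using assms(1) unfolding pos_semidef_mat_def by simp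
  have nn: "\<And>v. v \<bullet> (M *v v) \<ge> 0" using assms(1) unfolding pos_semidef_mat_def by simp
  define y where "y = M *v x"
  have cross: "y \<bullet> (M *v x) = x \<bullet> (M *v y)"
    using tr[of x M y] sym by (simp add: inner_commute)
  have "\<forall>t::real. 0 \<le> 2 * t * (y \<bullet> y) + t^2 * (y \<bullet> (M *v y))"
  proof
    fix t :: real
    have "0 \<le> (x + t *\<^sub>R y) \<bullet> (M *v (x + t *\<^sub>R y))" by (rule nn)
    also have "\<dots> = x \<bullet> (M *v x) + t * (x \<bullet> (M *v y)) + t * (y \<bullet> (M *v x)) + t^2 * (y \<bullet> (M *v y))"
      by (simp add: matrix_vector_right_distrib matrix_vector_mult_scaleR inner_add_left inner_add_right algebra_simps power2_eq_square)
    also have "\<dots> = 2 * t * (y \<bullet> y) + t^2 * (y \<bullet> (M *v y))"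
      using assms(2) cross by (simp add: y_def algebra_simps)
    finally show "0 \<le> 2 * t * (y \<bullet> y) + t^2 * (y \<bullet> (M *v y))" .
  qed
  hence "y \<bullet> y = 0"
  proof -
    assume H: "\<forall>t::real. 0 \<le> 2 * t * (y \<bullet> y) + t^2 * (y \<bullet> (M *v y))"
    show "y \<bullet> y = 0"
    proof (rule ccontr)
      assume ne: "y \<bullet> y \<noteq> 0"
      hence pos: "y \<bullet> y > 0" by (simp add: order_le_neq_trans)
      define c where "c = \<bar>y \<bullet> (M *v y)\<bar> + 1"
      have c: "c > 0" "y \<bullet> (M *v y) \<le> c" unfolding c_def by auto
      define t where "t = - (y \<bullet> y) / c"
      have tn: "t < 0" unfolding t_def using pos c by simp
      have "0 \<le> 2 * t * (y \<bullet> y) + t^2 * (y \<bullet> (M *v y))" using H by blast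
      also have "\<dots> \<le> 2 * t * (y \<bullet> y) + t^2 * c"
        using c by (simp add: mult_left_mono)
      also have "\<dots> = - (((y \<bullet> y)^2) / c)"
        unfolding t_def using c by (simp add: field_simps power2_eq_square)
      also have "\<dots> < 0" using pos c by simp
      finally show False by simp
    qed
  qed
  thus ?thesis unfolding y_def by simp
qed

theorem lemma3:
  fixes A B :: "real^'n^'n"
  assumes "int (rank (A - B)) = int (rank A) - int (rank B)"
    and "pos_def_mat (A + transpose A)"
    and "pos_semidef_mat (B + transpose B)"
  shows "ker_mat B = ker_mat (B + transpose B)"
proof -
  have pd: "\<And>x. x \<noteq> 0 \<Longrightarrow> x \<bullet> ((A + transpose A) *v x) > 0"
    using assms(2) unfolding pos_def_mat_def by blast
  have Azero: "z = 0" if "z \<bullet> (A *v z) = 0" for z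
    using pd[of z] quad_tr[of z A] that by force
  have "inj ((*v) A)"
  proof (rule injI)
    fix x y assume "A *v x = A *v y"
    hence "A *v (x - y) = 0" by (simp add: matrix_vector_mult_diff_distrib)
    thus "x = y" using Azero[of "x - y"] by simp
  qed
  hence rA: "rank A = CARD('n)" by (simp add: full_rank_injective)
  hence surjA: "surj ((*v) A)" by (simp add: full_rank_surjective)
  define R1 where "R1 = range ((*v) (A - B))"
  define R2 where "R2 = range ((*v) B)"
  have s1: "subspace R1" unfolding R1_def
    by (simp add: subspace_UNIV linear_subspace_image matrix_vector_mul_linear)
  have s2: "subspace R2" unfolding R2_def
    by (simp add: subspace_UNIV linear_subspace_image matrix_vector_mul_linear)
  have ds: "dim {x + y |x y. x \<in> R1 \<and> y \<in> R2} + dim (R1 \<inter> R2) = dim R1 + dim R2"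
    by (rule dim_sums_Int[OF s1 s2])
  have "range ((*v) A) \<subseteq> {x + y |x y. x \<in> R1 \<and> y \<in> R2}"
  proof
    fix v assume "v \<in> range ((*v) A)"
    then obtain u where "v = A *v u" by auto
    hence "v = (A - B) *v u + B *v u" by (simp add: matrix_vector_mult_diff_rdistrib)
    thus "v \<in> {x + y |x y. x \<in> R1 \<and> y \<in> R2}" unfolding R1_def R2_def by blast
  qed
  hence "rank A \<le> dim {x + y |x y. x \<in> R1 \<and> y \<in> R2}"
    by (simp add: rank_dim_range dim_subset)
  moreover have "dim R1 + dim R2 = rank A"
    using assms(1) unfolding R1_def R2_def rank_dim_range[symmetric] by linarith
  ultimately have "dim (R1 \<inter> R2) = 0" using ds by linarith
  hence inter: "R1 \<inter> R2 \<subseteq> {0}" by simp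
  have psdB: "pos_semidef_mat (B + transpose B)" by fact
  show ?thesis
  proof (rule set_eqI)
    fix x :: "real^'n"
    show "x \<in> ker_mat B \<longleftrightarrow> x \<in> ker_mat (B + transpose B)"
    proof
      assume "x \<in> ker_mat B"
      hence "B *v x = 0" by (simp add: ker_mat_def)
      hence "x \<bullet> ((B + transpose B) *v x) = 0" by (simp add: quad_tr)
      hence "(B + transpose B) *v x = 0" by (rule psd_zero[OF psdB])
      thus "x \<in> ker_mat (B + transpose B)" by (simp add: ker_mat_def)
    next
      assume "x \<in> ker_mat (B + transpose B)"
      hence h: "(B + transpose B) *v x = 0" by (simp add: ker_mat_def)
      hence BT: "transpose B *v x = - (B *v x)"
        by (simp add: matrix_vector_mult_add_rdistrib eq_neg_iff_add_eq_0 add.commute)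
      have xBx: "x \<bullet> (B *v x) = 0" using quad_tr[of x B] h by simp
      obtain z where z: "A *v z = B *v x" using surjA by (metis surj_def)
      have "(A - B) *v z = B *v (x - z)"
        using z by (simp add: matrix_vector_mult_diff_rdistrib matrix_vector_mult_diff_distrib)
      moreover have "(A - B) *v z \<in> R1" unfolding R1_def by blast
      moreover have "B *v (x - z) \<in> R2" unfolding R2_def by blast
      ultimately have "(A - B) *v z = 0" using inter by auto
      hence Az: "A *v z = B *v z" by (simp add: matrix_vector_mult_diff_rdistrib)
      hence Bz: "B *v z = B *v x" using z by simp
      have "x \<bullet> (B *v z) = (transpose B *v x) \<bullet> z" by (rule tr)
      hence "0 = - ((B *v x) \<bullet> z)" using Bz xBx BT by simp
      hence "z \<bullet> (A *v z) = 0" using z by (simp add: inner_commute)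
      hence "z = 0" by (rule Azero)
      hence "B *v x = 0" using z by simp
      thus "x \<in> ker_mat B" by (simp add: ker_mat_def)
    qed
  qed
qed

end
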